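(* The expected total number of queries to $\mathcal{O}_1$ and $\mathcal{O}_2$ performed by the modified multi-phase process described in the context is $O(n)$.
   Context: Let $n\ge2$ be an integer such that $m=n/\log_2 n$ is an integer, and let $S'$ be a set of $m$ distinct elements of a totally ordered set. For $\rho\in(0,1]$, $S^-_\rho$ denotes the set of the $\lceil \rho m\rceil$ smallest elements of $S'$ and $S^+_\rho=S'\setminus S^-_\rho$. There are two oracles $\mathcal{O}_1,\mathcal{O}_2$ which can be queried with an element $x\in S'$ and answer "relevant" or "not relevant" in constant time, all answers being mutually independent; for constants $p_1,p_2\in[0,\tfrac12)$: $\mathcal{O}_1$ reports $x$ relevant with probability at least $1-p_1$ if $x\in S^-_{1/6}$ and at most $p_1$ if $x\in S^+_{1/3}$; $\mathcal{O}_2$ reports $x$ relevant with probability at least $1-p_2$ if $x\in S^-_{1/3}$ and at most $p_2$ if $x\in S^+_{3/4}$. For $q\in[0,\tfrac12)$ let $c_q=\lceil 4(1-q)/(1-2q)^2\rceil$. Let $\eta = 1+\lceil \log_2 \frac{n}{\log_2 n}\rceil$. Modified multi-phase process: the elements of $S'$ are considered one at a time. For the current element $x$, a preliminary test is performed consisting of $8c_{p_1}\lceil \ln n\rceil+1$ queries to $\mathcal{O}_1$ on $x$; it is passed if the majority report $x$ relevant, otherwise $x$ is discarded and the next element is considered. Then, for $i=1,\dots,\eta$, the $i$-th test consists of $2\lceil 2^i\ln n\rceil c_{p_2}+1$ queries to $\mathcal{O}_2$ on $x$ and is passed if the majority report $x$ relevant; if $x$ fails a test it is discarded and the next element is considered.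 The process stops and returns the first element that passes the $\eta$-th test. Here $\ln$ is the natural logarithm; the $O(\cdot)$ constant depends only on $p_1,p_2$. *)

theory Defs
  imports "HOL-Probability.Probability"
begin

definition cq :: "real \<Rightarrow> nat" where
  "cq q = nat \<lceil>4 * (1 - q) / (1 - 2 * q)^2\<rceil>"

definition eta :: "nat \<Rightarrow> nat" where
  "eta n = 1 + nat \<lceil>log 2 (real n / log 2 (real n))\<rceil>"

definition prelim_size :: "real \<Rightarrow> nat \<Rightarrow> nat" where
  "prelim_size p1 n = 8 * cq p1 * nat \<lceil>ln (real n)\<rceil> + 1"

definition test_size :: "real \<Rightarrow> nat \<Rightarrow> nat \<Rightarrow> nat" where
  "test_size p2 n i = 2 * nat \<lceil>2 ^ i * ln (real n)\<rceil> * cq p2 + 1"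

text \<open>Outcome of a test consisting of N independent queries, each answering
  "relevant" with probability q: passed iff the majority answers "relevant".\<close>
definition majority_test :: "nat \<Rightarrow> real \<Rightarrow> bool pmf" where
  "majority_test N q = map_pmf (\<lambda>k. N < 2 * k) (binomial_pmf N q)"

text \<open>Run a sequence of tests (size, success probability of a single query)
  on one element; result: (number of queries spent, whether all tests passed).
  Stops at the first failed test.\<close>
fun run_tests :: "(nat \<times> real) list \<Rightarrow> (nat \<times> bool) pmf" where
  "run_tests [] = return_pmf (0, True)"
| "run_tests ((N, q) # ts) =
     majority_test N q \<bind> (\<lambda>b.
       if b then map_pmf (\<lambda>(c, r). (c + N, r)) (run_tests ts)
       else return_pmf (N, False))"

text \<open>The tests applied to element x: the preliminary test (oracle O1, relevance
  probability q1 x) followed by tests i = 1..eta (oracle O2, probability q2 x).\<close>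
definition elem_tests ::
  "real \<Rightarrow> real \<Rightarrow> nat \<Rightarrow> ('a \<Rightarrow> real) \<Rightarrow> ('a \<Rightarrow> real) \<Rightarrow> 'a \<Rightarrow> (nat \<times> real) list" where
  "elem_tests p1 p2 n q1 q2 x =
     (prelim_size p1 n, q1 x) # map (\<lambda>i. (test_size p2 n i, q2 x)) [1..<eta n + 1]"

text \<open>Distribution of the total number of queries of the modified multi-phase
  process, considering the elements in the order of the list; it stops as soon
  as an element passes all tests (or when the elements are exhausted).\<close>
fun process_cost ::
  "real \<Rightarrow> real \<Rightarrow> nat \<Rightarrow> ('a \<Rightarrow> real) \<Rightarrow> ('a \<Rightarrow> real) \<Rightarrow> 'a list \<Rightarrow> nat pmf" where
  "process_cost p1 p2 n q1 q2 [] = return_pmf 0"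
| "process_cost p1 p2 n q1 q2 (x # xs) =
     run_tests (elem_tests p1 p2 n q1 q2 x) \<bind> (\<lambda>(c, ok).
       if ok then return_pmf c else map_pmf (\<lambda>d. c + d) (process_cost p1 p2 n q1 q2 xs))"

text \<open>S^-_rho: the ceil(rho |S|) smallest elements of S; S^+_rho its complement in S.\<close>
definition lower_part :: "real \<Rightarrow> 'a::linorder set \<Rightarrow> 'a set" where
  "lower_part \<rho> S = {x \<in> S. card {y \<in> S. y < x} < nat \<lceil>\<rho> * real (card S)\<rceil>}"

definition upper_part :: "real \<Rightarrow> 'a::linorder set \<Rightarrow> 'a set" where
  "upper_part \<rho> S = S - lower_part \<rho> S"

end

theory Submission
  imports Defs
begin


lemma E_bind:
  fixes f :: "'b \<Rightarrow> real"
  assumes fin: "finite (set_pmf M)" and finN: "\<And>x. x \<in> set_pmf M \<Longrightarrow> finite (set_pmf (N x))"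
    and nn: "\<And>y. f y \<ge> 0"
  shows "measure_pmf.expectation (bind_pmf M N) f = measure_pmf.expectation M (\<lambda>x. measure_pmf.expectation (N x) f)"
proof -
  have finB: "finite (set_pmf (bind_pmf M N))" using fin finN by (auto simp: set_bind_pmf)
  have "(\<integral>\<^sup>+y. ennreal (f y) \<partial>bind_pmf M N) = (\<integral>\<^sup>+x. \<integral>\<^sup>+y. ennreal (f y) \<partial>N x \<partial>M)" by simp
  also have "\<dots> = (\<integral>\<^sup>+x. ennreal (measure_pmf.expectation (N x) f) \<partial>M)"
    apply (rule nn_integral_cong_AE)
    apply (simp add: AE_measure_pmf_iff)
    apply (intro ballI nn_integral_eq_integral)
    using finN nn by (auto intro: integrable_measure_pmf_finite)
  also have "\<dots> = ennreal (measure_pmf.expectation M (\<lambda>x. measure_pmf.expectation (N x) f))"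
    apply (rule nn_integral_eq_integral)
    using fin nn by (auto intro!: integrable_measure_pmf_finite integral_nonneg_AE)
  finally have 1: "(\<integral>\<^sup>+y. ennreal (f y) \<partial>bind_pmf M N) = ennreal (measure_pmf.expectation M (\<lambda>x. measure_pmf.expectation (N x) f))" .
  have 2: "(\<integral>\<^sup>+y. ennreal (f y) \<partial>bind_pmf M N) = ennreal (measure_pmf.expectation (bind_pmf M N) f)"
    apply (rule nn_integral_eq_integral)
    using finB nn by (auto intro!: integrable_measure_pmf_finite)
  have "0 \<le> measure_pmf.expectation (bind_pmf M N) f" using nn by (auto intro: integral_nonneg_AE)
  moreover have "0 \<le> measure_pmf.expectation M (\<lambda>x. measure_pmf.expectation (N x) f)" using nn by (auto intro!: integral_nonneg_AE)
  ultimately show ?thesis using 1 2 by simp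
qed

lemma fin_run: "finite (set_pmf (run_tests ts))"
proof (induction ts)
  case Nil then show ?case by simp
next
  case (Cons t ts)
  obtain N q where t: "t = (N, q)" by fastforce
  have "finite (set_pmf (majority_test N q))" by (rule finite_subset[of _ UNIV]) auto
  then show ?case using Cons by (auto simp: t set_bind_pmf)
qed

lemma fin_pc: "finite (set_pmf (process_cost p1 p2 n q1 q2 xs))"
  by (induction xs) (auto simp: set_bind_pmf fin_run split: if_splits)

lemma E_bool:
  fixes g :: "bool \<Rightarrow> real"
  shows "measure_pmf.expectation M g = pmf M True * g True + (1 - pmf M True) * g False"
  apply (subst integral_measure_pmf_real[where A=UNIV])
  by (auto simp: UNIV_bool pmf_False_conv_True)



definition cost :: "(nat \<times> real) list \<Rightarrow> real" where
  "cost ts = measure_pmf.expectation (run_tests ts) (\<lambda>r. real (fst r))"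
definition pass :: "(nat \<times> real) list \<Rightarrow> real" where
  "pass ts = measure_pmf.expectation (run_tests ts) (\<lambda>r. if snd r then 1 else 0)"

lemma cost_Nil: "cost [] = 0" by (simp add: cost_def)
lemma pass_Nil: "pass [] = 1" by (simp add: pass_def)

lemma cost_Cons: "cost ((N, q) # ts) = N + pmf (majority_test N q) True * cost ts"
proof -
  have fm: "finite (set_pmf (majority_test N q))" by (rule finite_subset[of _ UNIV]) auto
  have "cost ((N, q) # ts) = measure_pmf.expectation (majority_test N q)
     (\<lambda>b. measure_pmf.expectation (if b then map_pmf (\<lambda>(c, r). (c + N, r)) (run_tests ts)
       else return_pmf (N, False)) (\<lambda>r. real (fst r)))"
    unfolding cost_def run_tests.simps
    by (rule E_bind) (auto simp: fm fin_run)
  also have "\<dots> = pmf (majority_test N q) True * (real N + cost ts) + (1 - pmf (majority_test N q) True) * N"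
    apply (subst E_bool)
    apply (simp add: cost_def case_prod_unfold)
    apply (subst Bochner_Integration.integral_add)
    by (auto intro: integrable_measure_pmf_finite fin_run)
  finally show ?thesis by (simp add: algebra_simps)
qed

lemma pass_Cons: "pass ((N, q) # ts) = pmf (majority_test N q) True * pass ts"
proof -
  have fm: "finite (set_pmf (majority_test N q))" by (rule finite_subset[of _ UNIV]) auto
  have "pass ((N, q) # ts) = measure_pmf.expectation (majority_test N q)
     (\<lambda>b. measure_pmf.expectation (if b then map_pmf (\<lambda>(c, r). (c + N, r)) (run_tests ts)
       else return_pmf (N, False)) (\<lambda>r. if snd r then 1 else 0))"
    unfolding pass_def run_tests.simps
    by (rule E_bind) (auto simp: fm fin_run)
  also have "\<dots> = pmf (majority_test N q) True * pass ts"
    apply (subst E_bool)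
    by (simp add: pass_def case_prod_unfold)
  finally show ?thesis .
qed

lemma cost_nonneg: "cost ts \<ge> 0"
  unfolding cost_def by (auto intro: integral_nonneg_AE)
lemma pass_nonneg: "pass ts \<ge> 0"
  unfolding pass_def by (auto intro: integral_nonneg_AE)
lemma pass_le1: "pass ts \<le> 1"
  by (induction ts) (auto simp: pass_Nil pass_Cons pmf_le_1 intro!: mult_le_one pass_nonneg)

lemma cost_le: "cost ts \<le> sum_list (map (\<lambda>t. real (fst t)) ts)"
proof (induction ts)
  case Nil then show ?case by (simp add: cost_Nil)
next
  case (Cons t ts)
  obtain N q where t: "t = (N, q)" by fastforce
  have "pmf (majority_test N q) True * cost ts \<le> 1 * cost ts"
    by (intro mult_right_mono pmf_le_1 cost_nonneg)
  then show ?case using Cons by (simp add: t cost_Cons)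
qed

lemma pass_ge: "pass ts \<ge> 1 - sum_list (map (\<lambda>(N, q). pmf (majority_test N q) False) ts)"
proof (induction ts)
  case Nil then show ?case by (simp add: pass_Nil)
next
  case (Cons t ts)
  obtain N q where t: "t = (N, q)" by fastforce
  define S where "S = sum_list (map (\<lambda>(N, q). pmf (majority_test N q) False) ts)"
  define a where "a = pmf (majority_test N q) True"
  have S0: "S \<ge> 0" unfolding S_def by (auto intro!: sum_list_nonneg)
  have a: "0 \<le> a" "a \<le> 1" unfolding a_def by (auto simp: pmf_le_1)
  have IH: "pass ts \<ge> 1 - S" using Cons by (simp add: S_def)
  have "a * pass ts \<ge> a * (1 - S)" using IH a by (intro mult_left_mono) auto
  moreover have "a * (1 - S) \<ge> a - S" using a S0 by (simp add: algebra_simps mult_right_le_one_le)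
  moreover have "sum_list (map (\<lambda>(N, q). pmf (majority_test N q) False) (t # ts)) = (1 - a) + S"
    by (simp add: t S_def a_def pmf_False_conv_True[of "majority_test N q"])
  moreover have "pass (t # ts) = a * pass ts" by (simp add: t pass_Cons a_def)
  ultimately show ?case by simp
qed

definition pcE where "pcE p1 p2 n q1 q2 xs = measure_pmf.expectation (process_cost p1 p2 n q1 q2 xs) real"

lemma pcE_nonneg: "pcE p1 p2 n q1 q2 xs \<ge> 0"
  unfolding pcE_def by (auto intro: integral_nonneg_AE)

lemma pcE_Cons: "pcE p1 p2 n q1 q2 (x # xs) = cost (elem_tests p1 p2 n q1 q2 x)
   + (1 - pass (elem_tests p1 p2 n q1 q2 x)) * pcE p1 p2 n q1 q2 xs"
proof -
  let ?R = "run_tests (elem_tests p1 p2 n q1 q2 x)"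
  let ?E = "pcE p1 p2 n q1 q2 xs"
  have "pcE p1 p2 n q1 q2 (x # xs) = measure_pmf.expectation ?R
     (\<lambda>r. measure_pmf.expectation ((\<lambda>(c, ok). if ok then return_pmf c else map_pmf (\<lambda>d. c + d) (process_cost p1 p2 n q1 q2 xs)) r) real)"
    unfolding pcE_def process_cost.simps
    by (rule E_bind) (auto simp: fin_run fin_pc split: if_splits)
  also have "\<dots> = measure_pmf.expectation ?R (\<lambda>r. real (fst r) + (1 - (if snd r then 1 else 0)) * ?E)"
    apply (rule Bochner_Integration.integral_cong[OF refl])
    apply (auto simp: case_prod_unfold pcE_def)
    apply (subst Bochner_Integration.integral_add)
    by (auto intro: integrable_measure_pmf_finite fin_pc)
  also have "\<dots> = cost (elem_tests p1 p2 n q1 q2 x) + (1 - pass (elem_tests p1 p2 n q1 q2 x)) * ?E"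
  proof -
    have d: "measure_pmf.expectation ?R (\<lambda>r. 1 - (if snd r then 1 else 0 :: real)) = 1 - pass (elem_tests p1 p2 n q1 q2 x)"
      unfolding pass_def
      by (subst Bochner_Integration.integral_diff) (auto intro!: integrable_measure_pmf_finite fin_run)
    show ?thesis
      unfolding cost_def
      apply (subst Bochner_Integration.integral_add)
      by (auto intro!: integrable_measure_pmf_finite fin_run simp: d)
  qed
  finally show ?thesis .
qed



lemma maj_true:
  assumes "0 \<le> q" "q \<le> p" "p < 1/2" "N > 0"
  shows "pmf (majority_test N q) True \<le> exp (-2 * real N * (1/2 - p)^2)"
proof -
  have bd: "binomial_distribution q" using assms by unfold_locales auto
  have "pmf (majority_test N q) True = measure_pmf.prob (binomial_pmf N q) {k. N < 2 * k}"
    unfolding majority_test_def pmf_map by (simp add: vimage_def)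
  also have "\<dots> \<le> measure_pmf.prob (binomial_pmf N q) {x. real x / N \<ge> q + (1/2 - q)}"
    apply (rule measure_pmf.finite_measure_mono)
    using assms by (auto simp: field_simps)
  also have "\<dots> \<le> exp (real_of_int (- 2 * int N) * (1/2 - q)^2)"
    by (rule binomial_distribution.prob_ge'[OF bd]) (use assms in auto)
  also have "\<dots> = exp (-2 * real N * (1/2 - q)^2)" by simp
  also have "\<dots> \<le> exp (-2 * real N * (1/2 - p)^2)"
    using assms by (auto intro!: mult_left_mono power_mono)
  finally show ?thesis .
qed

lemma maj_false:
  assumes "1 - p \<le> q" "q \<le> 1" "0 \<le> p" "p < 1/2" "N > 0"
  shows "pmf (majority_test N q) False \<le> exp (-2 * real N * (1/2 - p)^2)"
proof -
  have bd: "binomial_distribution q" using assms by unfold_locales auto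
  have "pmf (majority_test N q) False = measure_pmf.prob (binomial_pmf N q) {k. \<not> N < 2 * k}"
    unfolding majority_test_def pmf_map by (simp add: vimage_def)
  also have "\<dots> \<le> measure_pmf.prob (binomial_pmf N q) {x. real x / N \<le> q - (q - 1/2)}"
    apply (rule measure_pmf.finite_measure_mono)
    using assms by (auto simp: field_simps)
  also have "\<dots> \<le> exp (real_of_int (- 2 * int N) * (q - 1/2)^2)"
    by (rule binomial_distribution.prob_le'[OF bd]) (use assms in auto)
  also have "\<dots> = exp (-2 * real N * (q - 1/2)^2)" by simp
  also have "\<dots> \<le> exp (-2 * real N * (1/2 - p)^2)"
    using assms by (auto intro!: mult_left_mono power_mono)
  finally show ?thesis .
qed



lemma cq_bound:
  assumes "0 \<le> p" "p < 1/2"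
  shows "real (cq p) * (1 - 2 * p)^2 \<ge> 4 * (1 - p)"
proof -
  have pos: "(1 - 2 * p)^2 > 0" using assms by auto
  have "real (cq p) \<ge> 4 * (1 - p) / (1 - 2 * p)^2"
    unfolding cq_def by linarith
  then have "real (cq p) * (1 - 2 * p)^2 \<ge> 4 * (1 - p) / (1 - 2 * p)^2 * (1 - 2 * p)^2"
    using pos by (intro mult_right_mono) auto
  then show ?thesis using pos by simp
qed

lemma exp_half: "2 * real N * (1/2 - p)^2 = real N * (1 - 2 * p)^2 / 2"
  by (simp add: power2_eq_square algebra_simps)

lemma prelim_bound:
  assumes n: "n \<ge> 2" and "0 \<le> q" "q \<le> p" "0 \<le> p" "p < 1/2"
  shows "pmf (majority_test (prelim_size p n) q) True \<le> 1 / real n"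
proof -
  let ?N = "prelim_size p n"
  have lnn: "ln (real n) \<ge> 0" using n by simp
  have N: "real ?N \<ge> 8 * real (cq p) * ln (real n)"
  proof -
    have "real (nat \<lceil>ln (real n)\<rceil>) \<ge> ln (real n)" by linarith
    then have "8 * real (cq p) * ln (real n) \<le> 8 * real (cq p) * real (nat \<lceil>ln (real n)\<rceil>)"
      by (intro mult_left_mono) auto
    then show ?thesis unfolding prelim_size_def by simp
  qed
  have c: "real (cq p) * (1 - 2 * p)^2 \<ge> 4 * (1 - p)" using cq_bound assms by auto
  have "real ?N * (1 - 2 * p)^2 / 2 \<ge> 8 * real (cq p) * ln (real n) * (1 - 2 * p)^2 / 2"
    using N by (intro divide_right_mono mult_right_mono) auto
  also have "8 * real (cq p) * ln (real n) * (1 - 2 * p)^2 / 2 = 4 * ln (real n) * (real (cq p) * (1 - 2 * p)^2)"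
    by (simp add: algebra_simps)
  also have "\<dots> \<ge> 4 * ln (real n) * (4 * (1 - p))"
    using c lnn by (intro mult_left_mono) auto
  also have "4 * ln (real n) * (4 * (1 - p)) = (16 * (1 - p)) * ln (real n)" by simp
  also have "(16 * (1 - p)) * ln (real n) \<ge> 1 * ln (real n)"
    using lnn assms by (intro mult_right_mono) auto
  finally have e: "real ?N * (1 - 2 * p)^2 / 2 \<ge> ln (real n)" by simp
  have "pmf (majority_test ?N q) True \<le> exp (-2 * real ?N * (1/2 - p)^2)"
    by (rule maj_true) (use assms in \<open>auto simp: prelim_size_def\<close>)
  also have "\<dots> = exp (- (real ?N * (1 - 2 * p)^2 / 2))"
    using exp_half[of ?N p] by simp
  also have "\<dots> \<le> exp (- ln (real n))" using e by simp
  also have "\<dots> = 1 / real n" using n by (simp add: exp_minus inverse_eq_divide)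
  finally show ?thesis .
qed

lemma test_bound:
  assumes n: "n \<ge> 2" and "1 - p \<le> q" "q \<le> 1" "0 \<le> p" "p < 1/2"
  shows "pmf (majority_test (test_size p n i) q) False \<le> (1/2) ^ (i + 1)"
proof -
  let ?N = "test_size p n i"
  have lnn: "ln (real n) \<ge> ln 2" using n by simp
  have ln2: "ln (2::real) > 0" by simp
  have N: "real ?N \<ge> 2 * 2 ^ i * ln (real n) * real (cq p)"
  proof -
    have "real (nat \<lceil>2 ^ i * ln (real n)\<rceil>) \<ge> 2 ^ i * ln (real n)" by linarith
    then have "2 * (2 ^ i * ln (real n)) * real (cq p) \<le> 2 * real (nat \<lceil>2 ^ i * ln (real n)\<rceil>) * real (cq p)"
      by (intro mult_right_mono) auto
    then show ?thesis unfolding test_size_def by simp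
  qed
  have c: "real (cq p) * (1 - 2 * p)^2 \<ge> 4 * (1 - p)" using cq_bound assms by auto
  have "real ?N * (1 - 2 * p)^2 / 2 \<ge> 2 * 2 ^ i * ln (real n) * real (cq p) * (1 - 2 * p)^2 / 2"
    using N by (intro divide_right_mono mult_right_mono) auto
  also have "2 * 2 ^ i * ln (real n) * real (cq p) * (1 - 2 * p)^2 / 2 = 2 ^ i * ln (real n) * (real (cq p) * (1 - 2 * p)^2)"
    by (simp add: algebra_simps)
  also have "\<dots> \<ge> 2 ^ i * ln 2 * (4 * (1 - p))"
    apply (rule mult_mono[OF _ c])
    using lnn ln2 assms by auto
  also have "2 ^ i * ln 2 * (4 * (1 - p)) = (4 * (1 - p) * 2 ^ i) * ln 2" by simp
  also have "(4 * (1 - p) * 2 ^ i) * ln 2 \<ge> real (i + 1) * ln 2"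
  proof (rule mult_right_mono)
    have "i + 1 < 2 ^ (i + 1)" by (rule less_exp)
    then have "real (i + 1) < real (2 ^ (i + 1))" by linarith
    then have "real (i + 1) \<le> 2 * 2 ^ i" by simp
    also have "2 * 2 ^ i \<le> (4 * (1 - p)) * (2::real) ^ i"
      using assms by (intro mult_right_mono) auto
    finally show "real (i + 1) \<le> 4 * (1 - p) * 2 ^ i" .
  qed (use ln2 in auto)
  finally have e0: "real ?N * (1 - 2 * p)^2 / 2 \<ge> real (i + 1) * ln 2" .
  have "pmf (majority_test ?N q) False \<le> exp (-2 * real ?N * (1/2 - p)^2)"
    by (rule maj_false) (use assms in \<open>auto simp: test_size_def\<close>)
  also have "\<dots> = exp (- (real ?N * (1 - 2 * p)^2 / 2))"
    using exp_half[of ?N p] by simp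
  also have "\<dots> \<le> exp (- (real (i + 1) * ln 2))" using e0 by simp
  also have "\<dots> = inverse (exp (real (i + 1) * ln 2))" by (simp only: exp_minus)
  also have "exp (real (i + 1) * ln 2) = 2 ^ (i + 1)"
    by (simp only: exp_of_nat_mult) simp
  also have "inverse ((2::real) ^ (i + 1)) = (1/2) ^ (i + 1)"
    by (simp add: power_one_over inverse_eq_divide)
  finally show ?thesis .
qed

lemma geo_sum: "(\<Sum>i\<in>{1..<k+1}. (1/2::real) ^ (i + 1)) \<le> 1/2 - (1/2)^(k+1)"
proof (induction k)
  case 0 then show ?case by simp
next
  case (Suc k)
  have "(\<Sum>i\<in>{1..<Suc k+1}. (1/2::real) ^ (i + 1)) = (\<Sum>i\<in>{1..<k+1}. (1/2::real) ^ (i + 1)) + (1/2)^(k+2)"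
    by simp
  then show ?case using Suc by simp
qed



definition Tsum :: "real \<Rightarrow> nat \<Rightarrow> real" where
  "Tsum p n = (\<Sum>i\<in>{1..<eta n + 1}. real (test_size p n i))"

lemma sum_list_upt_map: "sum_list (map f [m..<k]) = (\<Sum>i\<in>{m..<k}. f i)"
  by (simp add: interv_sum_list_conv_sum_set_nat)

lemma cost_L2: "cost (map (\<lambda>i. (test_size p n i, q)) [1..<eta n + 1]) \<le> Tsum p n"
proof -
  have "cost (map (\<lambda>i. (test_size p n i, q)) [1..<eta n + 1])
     \<le> sum_list (map (\<lambda>t. real (fst t)) (map (\<lambda>i. (test_size p n i, q)) [1..<eta n + 1]))"
    by (rule cost_le)
  also have "\<dots> = Tsum p n" unfolding Tsum_def
    by (simp add: o_def sum_list_upt_map)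
  finally show ?thesis .
qed

lemma Tsum_nonneg: "Tsum p n \<ge> 0" unfolding Tsum_def by (rule sum_nonneg) simp

lemma pass_L2:
  assumes n: "n \<ge> 2" and "1 - p \<le> q" "q \<le> 1" "0 \<le> p" "p < 1/2"
  shows "pass (map (\<lambda>i. (test_size p n i, q)) [1..<eta n + 1]) \<ge> 1/2"
proof -
  have "(\<Sum>i\<in>{1..<eta n + 1}. pmf (majority_test (test_size p n i) q) False)
        \<le> (\<Sum>i\<in>{1..<eta n + 1}. (1/2::real) ^ (i + 1))"
    by (intro sum_mono test_bound) (use assms in auto)
  also have "\<dots> \<le> 1/2 - (1/2)^(eta n + 1)" by (rule geo_sum)
  also have "\<dots> \<le> 1/2" by simp
  finally have s: "(\<Sum>i\<in>{1..<eta n + 1}. pmf (majority_test (test_size p n i) q) False) \<le> 1/2" .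
  have "pass (map (\<lambda>i. (test_size p n i, q)) [1..<eta n + 1])
     \<ge> 1 - sum_list (map (\<lambda>(N, q). pmf (majority_test N q) False) (map (\<lambda>i. (test_size p n i, q)) [1..<eta n + 1]))"
    by (rule pass_ge)
  also have "sum_list (map (\<lambda>(N, q). pmf (majority_test N q) False) (map (\<lambda>i. (test_size p n i, q)) [1..<eta n + 1]))
     = (\<Sum>i\<in>{1..<eta n + 1}. pmf (majority_test (test_size p n i) q) False)"
    by (simp add: o_def sum_list_upt_map)
  finally show ?thesis using s by linarith
qed

lemma main_ind:
  assumes n: "n \<ge> 2" and p: "0 \<le> p1" "p1 < 1/2" "0 \<le> p2" "p2 < 1/2"
  shows "(\<forall>x\<in>set xs. 0 \<le> q1 x \<and> q1 x \<le> 1 \<and> 0 \<le> q2 x \<and> q2 x \<le> 1 \<and> (q1 x \<le> p1 \<or> 1 - p2 \<le> q2 x))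
    \<Longrightarrow> pcE p1 p2 n q1 q2 xs \<le> real (length xs) * (real (prelim_size p1 n) + Tsum p2 n / real n) + 2 * Tsum p2 n"
proof (induction xs)
  case Nil
  then show ?case using Tsum_nonneg[of p2 n] by (simp add: pcE_def)
next
  case (Cons x xs)
  define P0 where "P0 = real (prelim_size p1 n)"
  define T where "T = Tsum p2 n"
  define F where "F = real (length xs) * (P0 + T / real n) + 2 * T"
  define E where "E = pcE p1 p2 n q1 q2 xs"
  define L where "L = map (\<lambda>i. (test_size p2 n i, q2 x)) [1..<eta n + 1]"
  define a where "a = pmf (majority_test (prelim_size p1 n) (q1 x)) True"
  have T0: "T \<ge> 0" unfolding T_def by (rule Tsum_nonneg)
  have P00: "P0 \<ge> 0" unfolding P0_def by simp
  have nn: "real n > 0" using n by simp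
  have F2T: "F \<ge> 2 * T" unfolding F_def using T0 P00 nn by (auto intro!: mult_nonneg_nonneg)
  have E: "E \<le> F" "E \<ge> 0" using Cons unfolding E_def F_def P0_def T_def by (auto intro: pcE_nonneg)
  have a: "0 \<le> a" "a \<le> 1" unfolding a_def by (auto simp: pmf_le_1)
  have et: "elem_tests p1 p2 n q1 q2 x = (prelim_size p1 n, q1 x) # L"
    unfolding elem_tests_def L_def by simp
  have costE: "cost (elem_tests p1 p2 n q1 q2 x) = P0 + a * cost L"
    unfolding et cost_Cons P0_def a_def by simp
  have passE: "pass (elem_tests p1 p2 n q1 q2 x) = a * pass L"
    unfolding et pass_Cons a_def by simp
  have cL1: "cost L \<le> T" unfolding L_def T_def by (rule cost_L2)
  have cL: "cost L \<le> T" "cost L \<ge> 0" using cL1 cost_nonneg by auto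
  have pL: "0 \<le> pass L" "pass L \<le> 1" by (auto intro: pass_nonneg pass_le1)
  have rec: "pcE p1 p2 n q1 q2 (x # xs) = P0 + a * cost L + (1 - a * pass L) * E"
    unfolding E_def pcE_Cons costE passE ..
  have xq: "0 \<le> q1 x" "q1 x \<le> 1" "0 \<le> q2 x" "q2 x \<le> 1" "q1 x \<le> p1 \<or> 1 - p2 \<le> q2 x"
    using Cons.prems by auto
  have goal: "P0 + a * cost L + (1 - a * pass L) * E \<le> real (length (x # xs)) * (P0 + T / real n) + 2 * T"
  proof (cases "q1 x \<le> p1")
    case True
    have "a \<le> 1 / real n" unfolding a_def by (rule prelim_bound) (use n p xq True in auto)
    then have "a * cost L \<le> (1 / real n) * T" using cL a by (intro mult_mono) auto
    moreover have "(1 - a * pass L) * E \<le> 1 * F" using E a pL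
      by (intro mult_mono) (auto intro: mult_nonneg_nonneg)
    ultimately show ?thesis unfolding F_def by (simp add: algebra_simps)
  next
    case False
    then have q2: "1 - p2 \<le> q2 x" using xq by auto
    have hp: "pass L \<ge> 1/2" unfolding L_def by (rule pass_L2) (use n p xq q2 in auto)
    have "a * cost L \<le> a * T" using cL a by (intro mult_left_mono) auto
    moreover have "(1 - a * pass L) * E \<le> (1 - a / 2) * F"
    proof (rule mult_mono)
      show "1 - a * pass L \<le> 1 - a / 2" using mult_left_mono[OF hp a(1)] by simp
      show "0 \<le> 1 - a / 2" using a by simp
    qed (use E in auto)
    moreover have "a * T \<le> a * (F / 2)" using F2T a by (intro mult_left_mono) auto
    moreover have "(1 - a / 2) * F = F - a * (F / 2)" by (simp add: algebra_simps)
    moreover have "real (length (x # xs)) * (P0 + T / real n) + 2 * T = F + P0 + T / real n"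
      unfolding F_def by (simp add: algebra_simps)
    moreover have "T / real n \<ge> 0" using T0 nn by simp
    ultimately show ?thesis by linarith
  qed
  show ?case using rec goal unfolding P0_def T_def by simp
qed



lemma pow_sum: "(\<Sum>i\<in>{1..<k+1}. (2::real) ^ i) \<le> 2 ^ (k + 1)"
  by (induction k) auto

lemma eta_pow:
  assumes n: "n \<ge> 2" and m: "m = real n / log 2 (real n)"
  shows "(2::real) ^ eta n \<le> 4 * m"
proof -
  have l1: "log 2 (real n) \<ge> 1" using n by simp
  have mpos: "m > 0" using m l1 n by simp
  have "real n < real (2 ^ n)" using less_exp[of n] by linarith
  then have "real n < 2 ^ n" by simp
  then have "log 2 (real n) < log 2 (2 ^ n)" using n by (subst log_less_cancel_iff) auto
  then have ln: "log 2 (real n) < real n" by (simp add: log_nat_power)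
  have "m \<ge> 1" unfolding m using l1 ln by (simp add: le_divide_eq)
  then have y0: "log 2 m \<ge> 0" by simp
  define k where "k = nat \<lceil>log 2 m\<rceil>"
  have k: "real k \<le> log 2 m + 1" unfolding k_def using y0 by linarith
  have "(2::real) ^ k = 2 powr real k" by (simp add: powr_realpow)
  also have "\<dots> \<le> 2 powr (log 2 m + 1)" using k by (intro powr_mono) auto
  also have "\<dots> = 2 * m" using mpos by (simp add: powr_add)
  finally have "(2::real) ^ k \<le> 2 * m" .
  moreover have "eta n = 1 + k" unfolding eta_def k_def m by simp
  ultimately show ?thesis by simp
qed



lemma m_facts:
  assumes n: "n \<ge> 2" and m: "m = real n / log 2 (real n)"
  shows "m * ln (real n) \<le> real n" "m \<le> real n" "m \<ge> 0"
proof -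
  have l1: "log 2 (real n) \<ge> 1" using n by simp
  have lnpos: "ln (real n) > 0" using n by simp
  have "m * ln (real n) = real n * ln 2" unfolding m log_def using lnpos by simp
  also have "\<dots> \<le> real n * 1" using ln_2_less_1 by (intro mult_left_mono) auto
  finally show "m * ln (real n) \<le> real n" by simp
  show "m \<le> real n" unfolding m using l1 n by (simp add: divide_le_eq)
  show "m \<ge> 0" unfolding m using l1 by simp
qed

lemma sum_aff: "(\<Sum>i\<in>A. a * (2::real) ^ i + b) = a * (\<Sum>i\<in>A. 2 ^ i) + real (card A) * b"
  by (simp add: sum.distrib sum_distrib_left)

lemma T_bound:
  assumes n: "n \<ge> 2" and m: "m = real n / log 2 (real n)"
  shows "Tsum p n \<le> (40 * real (cq p) + 4) * real n"
proof -
  let ?c = "real (cq p)"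
  let ?l = "ln (real n)"
  have lnpos: "?l > 0" using n by simp
  note mf = m_facts[OF n m]
  have "Tsum p n \<le> (\<Sum>i\<in>{1..<eta n + 1}. 2 * ?c * ?l * 2 ^ i + (2 * ?c + 1))"
    unfolding Tsum_def test_size_def
  proof (rule sum_mono)
    fix i
    have "2 ^ i * ?l \<ge> 0" using lnpos by simp
    then have "real (nat \<lceil>2 ^ i * ?l\<rceil>) \<le> 2 ^ i * ?l + 1" by linarith
    then have "2 * real (nat \<lceil>2 ^ i * ?l\<rceil>) * ?c \<le> 2 * (2 ^ i * ?l + 1) * ?c"
      by (intro mult_right_mono) auto
    then show "real (2 * nat \<lceil>2 ^ i * ?l\<rceil> * cq p + 1) \<le> 2 * ?c * ?l * 2 ^ i + (2 * ?c + 1)"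
      by (simp add: algebra_simps)
  qed
  also have "\<dots> = 2 * ?c * ?l * (\<Sum>i\<in>{1..<eta n + 1}. 2 ^ i) + real (eta n) * (2 * ?c + 1)"
    by (subst sum_aff) simp
  also have "\<dots> \<le> 2 * ?c * ?l * (4 * (4 * m)) + (4 * real n) * (2 * ?c + 1)"
  proof (rule add_mono)
    have "(\<Sum>i\<in>{1..<eta n + 1}. (2::real) ^ i) \<le> 2 ^ (eta n + 1)" by (rule pow_sum)
    also have "\<dots> = 2 * 2 ^ eta n" by simp
    also have "\<dots> \<le> 2 * (4 * m)" using eta_pow[OF n m] by simp
    finally have "(\<Sum>i\<in>{1..<eta n + 1}. (2::real) ^ i) \<le> 4 * (4 * m)" using mf by simp
    then show "2 * ?c * ?l * (\<Sum>i\<in>{1..<eta n + 1}. 2 ^ i) \<le> 2 * ?c * ?l * (4 * (4 * m))"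
      using lnpos by (intro mult_left_mono) auto
    have "real (eta n) < 2 ^ eta n"
    proof -
      have "real (eta n) < real (2 ^ eta n)" using less_exp[of "eta n"] by linarith
      then show ?thesis by simp
    qed
    also have "\<dots> \<le> 4 * m" by (rule eta_pow[OF n m])
    also have "\<dots> \<le> 4 * real n" using mf by simp
    finally show "real (eta n) * (2 * ?c + 1) \<le> (4 * real n) * (2 * ?c + 1)"
      by (intro mult_right_mono) auto
  qed
  also have "2 * ?c * ?l * (4 * (4 * m)) = 32 * ?c * (m * ?l)" by (simp add: algebra_simps)
  also have "\<dots> \<le> 32 * ?c * real n" using mf by (intro mult_left_mono) auto
  finally show ?thesis by (simp add: algebra_simps)
qed

lemma P0_bound:
  assumes n: "n \<ge> 2" and m: "m = real n / log 2 (real n)"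
  shows "m * real (prelim_size p n) \<le> (16 * real (cq p) + 1) * real n"
proof -
  let ?c = "real (cq p)"
  let ?l = "ln (real n)"
  have lnpos: "?l > 0" using n by simp
  note mf = m_facts[OF n m]
  have "real (prelim_size p n) \<le> 8 * ?c * (?l + 1) + 1"
  proof -
    have "real (nat \<lceil>?l\<rceil>) \<le> ?l + 1" using lnpos by linarith
    then have "8 * ?c * real (nat \<lceil>?l\<rceil>) \<le> 8 * ?c * (?l + 1)" by (intro mult_left_mono) auto
    then show ?thesis unfolding prelim_size_def by simp
  qed
  then have "m * real (prelim_size p n) \<le> m * (8 * ?c * (?l + 1) + 1)"
    using mf by (intro mult_left_mono) auto
  also have "\<dots> = 8 * ?c * (m * ?l) + (8 * ?c + 1) * m" by (simp add: algebra_simps)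
  also have "\<dots> \<le> 8 * ?c * real n + (8 * ?c + 1) * real n"
    using mf by (intro add_mono mult_left_mono) auto
  finally show ?thesis by (simp add: algebra_simps)
qed



theorem lemma17:
  fixes p1 p2 :: real
  assumes "0 \<le> p1" "p1 < 1/2" "0 \<le> p2" "p2 < 1/2"
  shows "\<exists>C::real. \<forall>(n::nat) (xs::'a::linorder list) (q1::'a \<Rightarrow> real) (q2::'a \<Rightarrow> real).
     2 \<le> n \<and> real (length xs) = real n / log 2 (real n) \<and> distinct xs
     \<and> (\<forall>x\<in>set xs. 0 \<le> q1 x \<and> q1 x \<le> 1 \<and> 0 \<le> q2 x \<and> q2 x \<le> 1)
     \<and> (\<forall>x\<in>lower_part (1/6) (set xs). 1 - p1 \<le> q1 x)
     \<and> (\<forall>x\<in>upper_part (1/3) (set xs). q1 x \<le> p1)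
     \<and> (\<forall>x\<in>lower_part (1/3) (set xs). 1 - p2 \<le> q2 x)
     \<and> (\<forall>x\<in>upper_part (3/4) (set xs). q2 x \<le> p2)
     \<longrightarrow> measure_pmf.expectation (process_cost p1 p2 n q1 q2 xs) real \<le> C * real n"
proof (intro exI allI impI)
  fix n :: nat and xs :: "'a list" and q1 q2 :: "'a \<Rightarrow> real"
  assume h: "2 \<le> n \<and> real (length xs) = real n / log 2 (real n) \<and> distinct xs
     \<and> (\<forall>x\<in>set xs. 0 \<le> q1 x \<and> q1 x \<le> 1 \<and> 0 \<le> q2 x \<and> q2 x \<le> 1)
     \<and> (\<forall>x\<in>lower_part (1/6) (set xs). 1 - p1 \<le> q1 x)
     \<and> (\<forall>x\<in>upper_part (1/3) (set xs). q1 x \<le> p1)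
     \<and> (\<forall>x\<in>lower_part (1/3) (set xs). 1 - p2 \<le> q2 x)
     \<and> (\<forall>x\<in>upper_part (3/4) (set xs). q2 x \<le> p2)"
  define m where "m = real (length xs)"
  have n: "n \<ge> 2" and m: "m = real n / log 2 (real n)" using h by (auto simp: m_def)
  have hx: "\<forall>x\<in>set xs. 0 \<le> q1 x \<and> q1 x \<le> 1 \<and> 0 \<le> q2 x \<and> q2 x \<le> 1 \<and> (q1 x \<le> p1 \<or> 1 - p2 \<le> q2 x)"
  proof
    fix x assume x: "x \<in> set xs"
    have "x \<in> lower_part (1/3) (set xs) \<or> x \<in> upper_part (1/3) (set xs)"
      using x unfolding upper_part_def by blast
    then show "0 \<le> q1 x \<and> q1 x \<le> 1 \<and> 0 \<le> q2 x \<and> q2 x \<le> 1 \<and> (q1 x \<le> p1 \<or> 1 - p2 \<le> q2 x)"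
      using h x by blast
  qed
  define P0 where "P0 = real (prelim_size p1 n)"
  define T where "T = Tsum p2 n"
  have nn: "real n > 0" using n by simp
  have E: "pcE p1 p2 n q1 q2 xs \<le> m * (P0 + T / real n) + 2 * T"
    unfolding m_def P0_def T_def by (rule main_ind[OF n assms hx])
  have T0: "T \<ge> 0" unfolding T_def by (rule Tsum_nonneg)
  note mf = m_facts[OF n m]
  have "m * (T / real n) \<le> real n * (T / real n)" using mf T0 nn by (intro mult_right_mono) auto
  then have mT: "m * (T / real n) \<le> T" using nn by simp
  have TB: "T \<le> (40 * real (cq p2) + 4) * real n" unfolding T_def by (rule T_bound[OF n m])
  have PB: "m * P0 \<le> (16 * real (cq p1) + 1) * real n" unfolding P0_def by (rule P0_bound[OF n m])
  have "measure_pmf.expectation (process_cost p1 p2 n q1 q2 xs) real = pcE p1 p2 n q1 q2 xs"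
    by (simp add: pcE_def)
  also have "\<dots> \<le> m * P0 + m * (T / real n) + 2 * T" using E by (simp add: algebra_simps)
  also have "\<dots> \<le> (16 * real (cq p1) + 1 + 3 * (40 * real (cq p2) + 4)) * real n"
    using PB mT TB by (simp add: algebra_simps)
  finally show "measure_pmf.expectation (process_cost p1 p2 n q1 q2 xs) real
     \<le> (16 * real (cq p1) + 1 + 3 * (40 * real (cq p2) + 4)) * real n" .
qed


end
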